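(* Let $k\in\mathbb{N}_0$ and $f(s)=(s-1/2-k)\,\Gamma(1/2-s)$. Then for every $j\in\mathbb{N}$, \[ \lim_{s\to 1/2+k}f^{(j)}(s)=(-1)^{k+j-1}\,j!\sum_{\ell_1+\ell_2+\dots+\ell_{k+1}=j}\frac{\Gamma^{(\ell_{k+1})}(1)}{\ell_{k+1}!}\prod_{i=1}^{k}(k-i+1)^{-(\ell_i+1)}. \]
   Context: $f^{(j)}$ and $\Gamma^{(\ell)}$ denote derivatives; the sum ranges over tuples $(\ell_1,\dots,\ell_{k+1})$ of nonnegative integers with sum $j$; empty products equal $1$. *)

theory Defs
  imports "HOL-Analysis.Analysis"
begin

end

theory Submission imports Defs "HOL-Complex_Analysis.Complex_Analysis" begin

definition Lset :: "nat \<Rightarrow> nat \<Rightarrow> (nat \<Rightarrow> nat) set" where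
  "Lset m n = {l. (\<forall>i. i \<notin> {1..m} \<longrightarrow> l i = 0) \<and> (\<Sum>i=1..m. l i) = n}"

lemma finite_Lset: "finite (Lset m n)"
proof -
  have "Lset m n \<subseteq> {l. \<forall>x. (x \<in> {1..m} \<longrightarrow> l x \<in> {..n}) \<and> (x \<notin> {1..m} \<longrightarrow> l x = 0)}"
  proof
    fix l assume l: "l \<in> Lset m n"
    have "\<forall>x. x \<in> {1..m} \<longrightarrow> l x \<le> n"
      using l unfolding Lset_def by (auto intro!: member_le_sum)
    with l show "l \<in> {l. \<forall>x. (x \<in> {1..m} \<longrightarrow> l x \<in> {..n}) \<and> (x \<notin> {1..m} \<longrightarrow> l x = 0)}"
      unfolding Lset_def by auto
  qed
  thus ?thesis by (rule finite_subset) (intro finite_set_of_finite_funs, auto)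
qed

lemma Lset_0: "Lset 0 n = (if n = 0 then {\<lambda>_. 0} else {})"
  unfolding Lset_def by auto

lemma sum_upd_out: "(\<Sum>i=1..m. (l(Suc m := v)) i) = (\<Sum>i=1..m. l i)"
  by (rule sum.cong) auto

lemma prod_upd_out: "(\<Prod>i=1..m. g ((l(Suc m := v)) i) i) = (\<Prod>i=1..m. g (l i) i)"
  by (rule prod.cong) auto

lemma Lset_Suc_bij:
  "bij_betw (\<lambda>(a,l). l(Suc m := n - a)) (SIGMA a:{0..n}. Lset m a) (Lset (Suc m) n)"
proof (rule bij_betw_byWitness[where f' = "\<lambda>l. (n - l (Suc m), l(Suc m := 0))"])
  show "\<forall>x\<in>(SIGMA a:{0..n}. Lset m a). (\<lambda>l. (n - l (Suc m), l(Suc m := 0))) ((\<lambda>(a,l). l(Suc m := n - a)) x) = x"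
    by (auto simp: Lset_def fun_eq_iff)
  show "\<forall>l\<in>Lset (Suc m) n. (\<lambda>(a,l). l(Suc m := n - a)) ((\<lambda>l. (n - l (Suc m), l(Suc m := 0))) l) = l"
  proof
    fix l assume l: "l \<in> Lset (Suc m) n"
    hence "(\<Sum>i=1..Suc m. l i) = n" by (simp add: Lset_def)
    hence "l (Suc m) \<le> n" by (simp add: atLeastAtMostSuc_conv)
    thus "(\<lambda>(a,l). l(Suc m := n - a)) ((\<lambda>l. (n - l (Suc m), l(Suc m := 0))) l) = l"
      by (auto simp: fun_eq_iff)
  qed
  show "(\<lambda>(a,l). l(Suc m := n - a)) ` (SIGMA a:{0..n}. Lset m a) \<subseteq> Lset (Suc m) n"
    by (auto simp: Lset_def atLeastAtMostSuc_conv sum_upd_out)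
  show "(\<lambda>l. (n - l (Suc m), l(Suc m := 0))) ` Lset (Suc m) n \<subseteq> (SIGMA a:{0..n}. Lset m a)"
  proof
    fix p assume "p \<in> (\<lambda>l. (n - l (Suc m), l(Suc m := 0))) ` Lset (Suc m) n"
    then obtain l where l: "l \<in> Lset (Suc m) n" and p: "p = (n - l (Suc m), l(Suc m := 0))" by auto
    hence s: "(\<Sum>i=1..m. l i) + l (Suc m) = n" by (simp add: Lset_def atLeastAtMostSuc_conv)
    show "p \<in> (SIGMA a:{0..n}. Lset m a)"
      using l s unfolding p Lset_def by (auto simp: sum_upd_out)
  qed
qed

lemma leibniz_multi:
  fixes h :: "nat \<Rightarrow> complex \<Rightarrow> complex"
  assumes hol: "\<And>i. h i holomorphic_on S" and S: "open S" and z: "z \<in> S"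
  shows "(deriv ^^ n) (\<lambda>w. \<Prod>i=1..m. h i w) z =
    (\<Sum>l\<in>Lset m n. fact n / (\<Prod>i=1..m. fact (l i)) * (\<Prod>i=1..m. (deriv ^^ l i) (h i) z))"
proof (induction m arbitrary: n)
  case 0
  show ?case by (simp add: Lset_0)
next
  case (Suc m)
  define G where "G = (\<lambda>l. fact n / (\<Prod>i=1..Suc m. fact (l i)) * (\<Prod>i=1..Suc m. (deriv ^^ l i) (h i) z) :: complex)"
  define F where "F = (\<lambda>a l. fact n / ((\<Prod>i=1..m. fact (l i)) * fact (n - a)) *
      ((\<Prod>i=1..m. (deriv ^^ l i) (h i) z) * (deriv ^^ (n - a)) (h (Suc m)) z) :: complex)"
  have "(deriv ^^ n) (\<lambda>w. \<Prod>i=1..Suc m. h i w) z = (deriv ^^ n) (\<lambda>w. (\<Prod>i=1..m. h i w) * h (Suc m) w) z"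
    by (simp add: atLeastAtMostSuc_conv mult.commute)
  also have "\<dots> = (\<Sum>a=0..n. of_nat (n choose a) * (deriv ^^ a) (\<lambda>w. \<Prod>i=1..m. h i w) z * (deriv ^^ (n - a)) (h (Suc m)) z)"
    by (rule higher_deriv_mult[OF _ hol S z]) (intro holomorphic_on_prod hol)
  also have "\<dots> = (\<Sum>a=0..n. \<Sum>l\<in>Lset m a. F a l)"
  proof (rule sum.cong[OF refl])
    fix a assume a: "a \<in> {0..n}"
    have "of_nat (n choose a) * (deriv ^^ a) (\<lambda>w. \<Prod>i=1..m. h i w) z * (deriv ^^ (n - a)) (h (Suc m)) z
      = (\<Sum>l\<in>Lset m a. of_nat (n choose a) * (fact a / (\<Prod>i=1..m. fact (l i)) * (\<Prod>i=1..m. (deriv ^^ l i) (h i) z)) * (deriv ^^ (n - a)) (h (Suc m)) z)"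
      unfolding Suc.IH sum_distrib_left sum_distrib_right ..
    also have "\<dots> = (\<Sum>l\<in>Lset m a. F a l)"
    proof (rule sum.cong[OF refl])
      fix l
      have "(of_nat (n choose a) :: complex) = fact n / (fact a * fact (n - a))"
        using a by (simp add: binomial_fact)
      thus "of_nat (n choose a) * (fact a / (\<Prod>i=1..m. fact (l i)) * (\<Prod>i=1..m. (deriv ^^ l i) (h i) z)) * (deriv ^^ (n - a)) (h (Suc m)) z = F a l"
        by (simp add: F_def field_simps)
    qed
    finally show "of_nat (n choose a) * (deriv ^^ a) (\<lambda>w. \<Prod>i=1..m. h i w) z * (deriv ^^ (n - a)) (h (Suc m)) z = (\<Sum>l\<in>Lset m a. F a l)" .
  qed
  also have "\<dots> = (\<Sum>(a,l)\<in>(SIGMA a:{0..n}. Lset m a). F a l)"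
    by (rule sum.Sigma) (auto simp: finite_Lset)
  also have "\<dots> = (\<Sum>(a,l)\<in>(SIGMA a:{0..n}. Lset m a). G (l(Suc m := n - a)))"
    by (rule sum.cong[OF refl]) (auto simp: F_def G_def atLeastAtMostSuc_conv prod_upd_out[where g = "\<lambda>x i. fact x"] prod_upd_out[where g = "\<lambda>x i. (deriv ^^ x) (h i) z"] mult_ac)
  also have "\<dots> = sum G (Lset (Suc m) n)"
    using sum.reindex_bij_betw[OF Lset_Suc_bij[of m n], of G]
    by (simp add: case_prod_unfold)
  finally show ?case by (simp add: G_def)
qed

lemma real_higher_deriv_transfer:
  fixes F :: "complex \<Rightarrow> complex" and f :: "real \<Rightarrow> real"
  assumes F: "F holomorphic_on S" "open S" and T: "open T"
    and sub: "\<And>x. x \<in> T \<Longrightarrow> complex_of_real x \<in> S"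
    and eq: "\<And>x. x \<in> T \<Longrightarrow> F (of_real x) = of_real (f x)"
  shows "x \<in> T \<Longrightarrow> (deriv ^^ n) F (of_real x) = of_real ((deriv ^^ n) f x)"
proof (induction n arbitrary: x)
  case 0 thus ?case using eq by simp
next
  case (Suc n)
  define G where "G = (deriv ^^ n) F"
  define g where "g = (deriv ^^ n) f"
  define D where "D = (deriv ^^ Suc n) F (of_real x)"
  have Gd: "(G has_field_derivative D) (at (of_real x))"
    using has_field_derivative_higher_deriv[OF F] sub Suc.prems by (simp add: G_def D_def)
  then have "((\<lambda>y. G (of_real y)) has_vector_derivative D) (at x)"
    using has_vector_derivative_real_field by blast
  then have "((\<lambda>y. complex_of_real (g y)) has_vector_derivative D) (at x)"
    by (rule has_vector_derivative_transform_within_open[OF _ T Suc.prems])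
       (use Suc.IH in \<open>simp add: G_def g_def\<close>)
  note d1 = has_field_derivative_Re[OF this] and d2 = has_field_derivative_Im[OF this]
  from d1 have "(g has_field_derivative Re D) (at x)" by simp
  hence "deriv g x = Re D" by (rule DERIV_imp_deriv)
  moreover from d2 have "((\<lambda>y. 0::real) has_field_derivative Im D) (at x)" by simp
  hence "Im D = 0" using DERIV_const DERIV_unique by blast
  ultimately show ?case
    by (simp add: g_def D_def complex_eq_iff)
qed
lemma higher_deriv_inv_lin:
  fixes c u :: complex
  assumes "u \<noteq> c"
  shows "(deriv ^^ n) (\<lambda>w. 1 / (w - c)) u = (-1)^n * fact n / (u - c)^(Suc n)"
  using assms
proof (induction n arbitrary: u)
  case 0 thus ?case by simp
next
  case (Suc n)
  have ev: "eventually (\<lambda>w. w \<noteq> c) (nhds u)"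
    using eventually_nhds_in_open[of "-{c}" u] Suc.prems by auto
  have "(deriv ^^ Suc n) (\<lambda>w. 1 / (w - c)) u = deriv ((deriv ^^ n) (\<lambda>w. 1 / (w - c))) u" by simp
  also have "\<dots> = deriv (\<lambda>w. (-1)^n * fact n / (w - c)^(Suc n)) u"
    by (rule deriv_cong_ev[OF eventually_mono[OF ev]]) (auto simp: Suc.IH)
  also have "\<dots> = (-1)^Suc n * fact (Suc n) / (u - c)^(Suc (Suc n))"
  proof (rule DERIV_imp_deriv)
    have "u - c \<noteq> 0" using Suc.prems by simp
    show "((\<lambda>w. (-1)^n * fact n / (w - c)^(Suc n)) has_field_derivative (-1)^Suc n * fact (Suc n) / (u - c)^(Suc (Suc n))) (at u)"
      by (rule derivative_eq_intros refl | use \<open>u - c \<noteq> 0\<close> in simp)+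
  qed
  finally show ?case .
qed
lemma gamma_id:
  fixes u :: real
  assumes u: "u \<notin> \<int>"
  shows "u * Gamma (u - real k) = Gamma (1 + u) * (\<Prod>i=1..k. 1 / (u - real (k - i + 1)))"
proof -
  define z where "z = u - real k"
  have zn: "z \<notin> \<int>\<^sub>\<le>\<^sub>0"
  proof
    assume "z \<in> \<int>\<^sub>\<le>\<^sub>0"
    hence "z \<in> \<int>" using nonpos_Ints_subset_Ints by blast
    hence "z + real k \<in> \<int>" by simp
    thus False using u by (simp add: z_def)
  qed
  have Q: "(\<Prod>m<k. z + real m) = (\<Prod>i=1..k. u - real (k - i + 1))"
    by (rule prod.reindex_bij_witness[of _ "\<lambda>i. i - 1" "\<lambda>m. m + 1"]) (auto simp: z_def of_nat_diff)
  have Qnz: "(\<Prod>i=1..k. u - real (k - i + 1)) \<noteq> 0"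
  proof -
    have "u - real (k - i + 1) \<noteq> 0" for i
    proof
      assume "u - real (k - i + 1) = 0"
      hence "u = real (k - i + 1)" by simp
      thus False using u by (metis Ints_of_nat)
    qed
    hence "\<forall>i\<in>{1..k}. u - real (k - i + 1) \<noteq> 0" by blast
    thus ?thesis by (subst prod_zero_iff) (simp_all only: finite_atLeastAtMost, blast)
  qed
  have "pochhammer z (Suc k) = Gamma (z + of_nat (Suc k)) / Gamma z"
    by (rule pochhammer_Gamma[OF zn])
  moreover have "pochhammer z (Suc k) = (\<Prod>m<k. z + real m) * u"
    by (simp add: pochhammer_prod z_def atLeast0LessThan)
  moreover have "z + of_nat (Suc k) = 1 + u" by (simp add: z_def)
  moreover have "Gamma z \<noteq> 0" using Gamma_nonzero[OF zn] .
  ultimately have "Gamma (1 + u) = (\<Prod>i=1..k. u - real (k - i + 1)) * u * Gamma z"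
    using Q by (simp add: field_simps)
  hence "u * Gamma z = Gamma (1 + u) / (\<Prod>i=1..k. u - real (k - i + 1))"
    using Qnz by (simp add: field_simps)
  also have "\<dots> = Gamma (1 + u) * (\<Prod>i=1..k. 1 / (u - real (k - i + 1)))"
    by (simp add: prod_dividef)
  finally show ?thesis by (simp add: z_def)
qed

lemma Re_pos_not_nonpos_Int: "0 < Re (z::complex) \<Longrightarrow> z \<notin> \<int>\<^sub>\<le>\<^sub>0"
  by (auto elim!: nonpos_Ints_cases)

lemma ball_Re: "w \<in> ball (0::complex) 1 \<Longrightarrow> -1 < Re w"
  using abs_Re_le_cmod[of w] by simp

lemma not_Int_small: "0 < \<bar>u::real\<bar> \<Longrightarrow> \<bar>u\<bar> < 1 \<Longrightarrow> u \<notin> \<int>"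
  by (auto elim!: Ints_cases)

theorem lemma3:
  fixes k j :: nat and f :: "real \<Rightarrow> real"
  assumes f_def: "f = (\<lambda>s. (s - 1/2 - real k) * Gamma (1/2 - s))"
    and j: "j \<ge> 1"
  shows "((\<lambda>s. (deriv ^^ j) f s) \<longlongrightarrow>
           (-1) ^ (k + j - 1) * fact j *
           (\<Sum>l \<in> {l :: nat \<Rightarrow> nat. (\<forall>i. i \<notin> {1..k+1} \<longrightarrow> l i = 0)
                                   \<and> (\<Sum>i=1..k+1. l i) = j}.
              (deriv ^^ l (k+1)) Gamma (1::real) / fact (l (k+1)) *
              (\<Prod>i=1..k. 1 / (real (k - i + 1)) ^ (l i + 1))))
         (at (1/2 + real k))"
proof -
  define a :: real where "a = 1/2 + real k"
  define h :: "nat \<Rightarrow> complex \<Rightarrow> complex" where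
    "h = (\<lambda>i. if i = k+1 then (\<lambda>u. Gamma (1 + u)) else (\<lambda>u. 1 / (u - of_nat (k - i + 1))))"
  define hr :: "nat \<Rightarrow> real \<Rightarrow> real" where
    "hr = (\<lambda>i. if i = k+1 then (\<lambda>u. Gamma (1 + u)) else (\<lambda>u. 1 / (u - real (k - i + 1))))"
  define P where "P = (\<lambda>u. \<Prod>i=1..k+1. h i u)"
  define pr where "pr = (\<lambda>u. \<Prod>i=1..k+1. hr i u)"
  define Fc where "Fc = (\<lambda>z. - P (-1 * z + complex_of_real a))"
  define fr where "fr = (\<lambda>s. - pr (a - s))"
  define SS where "SS = ball (complex_of_real a) 1"
  define R where "R = (\<lambda>l. (deriv ^^ l (k+1)) Gamma (1::real) / fact (l (k+1)) *
              (\<Prod>i=1..k. 1 / (real (k - i + 1)) ^ (l i + 1)))"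
  have Gamma_hol1: "(\<lambda>u. Gamma (1 + u)) holomorphic_on ball (0::complex) 1"
  proof (intro holomorphic_Gamma' holomorphic_intros)
    fix u :: complex assume "u \<in> ball 0 1"
    hence "\<bar>Re u\<bar> < 1" using abs_Re_le_cmod[of u] by simp
    thus "1 + u \<notin> \<int>\<^sub>\<le>\<^sub>0" by (intro Re_pos_not_nonpos_Int) simp
  qed
  have hhol: "h i holomorphic_on ball 0 1" for i
  proof (cases "i = k+1")
    case True thus ?thesis using Gamma_hol1 by (simp add: h_def)
  next
    case False
    have "u \<noteq> of_nat (k - i + 1)" if "u \<in> ball 0 1" for u :: complex
    proof
      assume "u = of_nat (k - i + 1)"
      hence "norm u = real (k - i + 1)" by (simp only: norm_of_nat)
      thus False using that by simp
    qed
    thus ?thesis using False by (simp add: h_def) (intro holomorphic_intros, auto)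
  qed
  have Phol: "P holomorphic_on ball 0 1"
    unfolding P_def by (intro holomorphic_on_prod hhol)
  have inb: "-1 * w + complex_of_real a \<in> ball 0 1" if "w \<in> SS" for w
    using that by (simp add: SS_def dist_norm norm_minus_commute)
  have Pchol: "(\<lambda>z. P (-1 * z + complex_of_real a)) holomorphic_on SS"
  proof -
    have "(P \<circ> (\<lambda>z. -1 * z + complex_of_real a)) holomorphic_on SS"
      by (rule holomorphic_on_compose_gen[OF _ Phol image_subsetI[OF inb]]) (intro holomorphic_intros)
    thus ?thesis by (simp add: o_def)
  qed
  have Fchol: "Fc holomorphic_on SS"
    unfolding Fc_def by (intro holomorphic_intros Pchol)
  have P_real: "P (of_real y) = of_real (pr y)" for y
    unfolding P_def pr_def of_real_prod
    by (rule prod.cong[OF refl]) (auto simp: h_def hr_def simp flip: Gamma_complex_of_real)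
  have Fc_real: "Fc (of_real x) = of_real (fr x)" for x
    unfolding Fc_def fr_def using P_real[of "a - x"] by simp
  have transfer: "x \<in> ball a 1 \<Longrightarrow> (deriv ^^ n) Fc (of_real x) = of_real ((deriv ^^ n) fr x)" for x n
    by (rule real_higher_deriv_transfer[OF Fchol _ open_ball]) (auto simp: SS_def Fc_real dist_norm simp flip: of_real_diff)
  have feq: "f s = fr s" if s: "s \<in> ball a 1 - {a}" for s
  proof -
    define u where "u = a - s"
    have u: "0 < \<bar>u\<bar>" "\<bar>u\<bar> < 1" using s by (auto simp: u_def dist_norm)
    have gi: "u * Gamma (u - real k) = Gamma (1 + u) * (\<Prod>i=1..k. 1 / (u - real (k - i + 1)))"
      by (rule gamma_id[OF not_Int_small[OF u]])
    have "pr u = (\<Prod>i=1..k. hr i u) * hr (k+1) u"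
      by (simp add: pr_def atLeastAtMostSuc_conv)
    also have "(\<Prod>i=1..k. hr i u) = (\<Prod>i=1..k. 1 / (u - real (k - i + 1)))"
      by (rule prod.cong) (auto simp: hr_def)
    finally have "pr u = u * Gamma (u - real k)" using gi by (simp add: hr_def)
    moreover have "f s = - (u * Gamma (u - real k))"
      by (simp add: f_def u_def a_def algebra_simps)
    ultimately show ?thesis by (simp add: fr_def u_def)
  qed
  have ev: "eventually (\<lambda>s. (deriv ^^ j) f s = Re ((deriv ^^ j) Fc (of_real s))) (at a)"
  proof -
    have "eventually (\<lambda>s. s \<in> ball a 1) (nhds a)"
      by (rule eventually_nhds_in_open) auto
    hence "eventually (\<lambda>s. s \<in> ball a 1 - {a}) (at a)"
      unfolding eventually_at_filter by (auto elim: eventually_mono)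
    thus ?thesis
    proof (rule eventually_mono)
      fix s assume s: "s \<in> ball a 1 - {a}"
      have "eventually (\<lambda>x. x \<in> ball a 1 - {a}) (nhds s)"
        using s by (intro eventually_nhds_in_open) (auto simp: open_Diff)
      hence "eventually (\<lambda>x. f x = fr x) (nhds s)"
        by (auto elim!: eventually_mono intro: feq)
      hence "(deriv ^^ j) f s = (deriv ^^ j) fr s"
        by (rule higher_deriv_cong_ev) simp
      thus "(deriv ^^ j) f s = Re ((deriv ^^ j) Fc (of_real s))"
        using transfer[of s j] s by simp
    qed
  qed
  have lim: "((\<lambda>s. Re ((deriv ^^ j) Fc (of_real s))) \<longlongrightarrow> Re ((deriv ^^ j) Fc (of_real a))) (at a)"
  proof -
    have "continuous_on SS ((deriv ^^ j) Fc)"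
      by (intro holomorphic_on_imp_continuous_on holomorphic_higher_deriv Fchol) (simp add: SS_def)
    hence "isCont ((deriv ^^ j) Fc) (of_real a)"
      by (simp add: SS_def continuous_on_eq_continuous_at)
    hence "((\<lambda>s. (deriv ^^ j) Fc (of_real s)) \<longlongrightarrow> (deriv ^^ j) Fc (of_real a)) (at a)"
      by (rule isCont_tendsto_compose) (intro tendsto_of_real tendsto_ident_at)
    thus ?thesis by (rule tendsto_Re)
  qed
  have aSS: "complex_of_real a \<in> SS" by (simp add: SS_def)
  have "(deriv ^^ j) Fc (of_real a) = - (deriv ^^ j) (\<lambda>z. P (-1 * z + complex_of_real a)) (of_real a)"
    unfolding Fc_def
  proof (rule higher_deriv_uminus[OF _ _ aSS])
    show "(\<lambda>z. P (-1 * z + complex_of_real a)) holomorphic_on SS"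
      by (rule Pchol)
  qed (simp add: SS_def)
  also have "(deriv ^^ j) (\<lambda>z. P (-1 * z + complex_of_real a)) (of_real a) = (-1)^j * (deriv ^^ j) P (-1 * of_real a + of_real a)"
    by (rule higher_deriv_compose_linear'[OF Phol _ open_ball aSS inb]) (simp add: SS_def)
  finally have D1: "(deriv ^^ j) Fc (of_real a) = - ((-1)^j * (deriv ^^ j) P 0)" by simp
  have D2: "(deriv ^^ j) P 0 = (\<Sum>l\<in>Lset (k+1) j. fact j / (\<Prod>i=1..k+1. fact (l i)) * (\<Prod>i=1..k+1. (deriv ^^ l i) (h i) 0))"
    unfolding P_def by (rule leibniz_multi[OF hhol open_ball]) simp
  have Dk1: "(deriv ^^ n) (h (k+1)) 0 = of_real ((deriv ^^ n) Gamma (1::real))" for n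
  proof -
    have "(deriv ^^ n) (h (k+1)) 0 = (deriv ^^ n) (\<lambda>w. Gamma (1 * w + 1)) 0"
      by (simp add: h_def add.commute)
    also have "\<dots> = 1 ^ n * (deriv ^^ n) Gamma (1 * 0 + 1)"
      by (rule higher_deriv_compose_linear'[OF _ open_ball[of 0 1] open_halfspace_Re_gt[of 0]])
         (auto intro!: holomorphic_Gamma simp: Re_pos_not_nonpos_Int, smt (verit) abs_Re_le_cmod)
    also have "\<dots> = (deriv ^^ n) Gamma (of_real 1)" by simp
    also have "\<dots> = of_real ((deriv ^^ n) Gamma (1::real))"
      by (rule real_higher_deriv_transfer[OF _ open_halfspace_Re_gt[of 0] open_greaterThan[of 0]])
         (auto intro!: holomorphic_Gamma simp: Re_pos_not_nonpos_Int Gamma_complex_of_real)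
    finally show ?thesis .
  qed
  have Di: "(deriv ^^ n) (h i) 0 = - (fact n * (1 / of_nat (k - i + 1) ^ (n + 1)))" if i: "i \<in> {1..k}" for i n
  proof -
    have "(deriv ^^ n) (h i) 0 = (deriv ^^ n) (\<lambda>w. 1 / (w - of_nat (k - i + 1))) 0"
      using i by (simp add: h_def)
    also have "\<dots> = (-1)^n * fact n / (0 - of_nat (k - i + 1))^(Suc n)"
      using of_nat_eq_0_iff[of "k - i + 1", where 'a=complex] by (intro higher_deriv_inv_lin) (metis add_eq_0_iff_both_eq_0 one_neq_zero)
    also have "\<dots> = - (fact n * (1 / of_nat (k - i + 1) ^ (n + 1)))"
      using of_nat_eq_0_iff[of "k - i + 1", where 'a=complex] by (simp add: power_minus' divide_simps del: of_nat_add of_nat_Suc)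
    finally show ?thesis .
  qed
  have trm: "fact j / (\<Prod>i=1..k+1. fact (l i)) * (\<Prod>i=1..k+1. (deriv ^^ l i) (h i) 0)
       = complex_of_real ((-1)^k * fact j * R l)" for l
  proof -
    have pf: "(\<Prod>i=1..k. fact (l i) :: complex) \<noteq> 0"
      by (subst prod_zero_iff) auto
    have "(\<Prod>i=1..k. (deriv ^^ l i) (h i) 0) = (\<Prod>i=1..k. - (fact (l i) * (1 / of_nat (k - i + 1) ^ (l i + 1))))"
      by (rule prod.cong[OF refl]) (rule Di)
    also have "\<dots> = (-1)^k * ((\<Prod>i=1..k. fact (l i)) * (\<Prod>i=1..k. 1 / of_nat (k - i + 1) ^ (l i + 1)))"
      unfolding prod_uminus prod.distrib by simp
    finally have pd: "(\<Prod>i=1..k. (deriv ^^ l i) (h i) 0) = \<dots>" .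
    have pc: "(\<Prod>i=1..k. 1 / of_nat (k - i + 1) ^ (l i + 1) :: complex) = of_real (\<Prod>i=1..k. 1 / real (k - i + 1) ^ (l i + 1))"
      by (simp add: of_real_prod)
    have e1: "(\<Prod>i=1..k+1. fact (l i) :: complex) = (\<Prod>i=1..k. fact (l i)) * fact (l (k+1))"
      by (simp add: atLeastAtMostSuc_conv)
    have e2: "(\<Prod>i=1..k+1. (deriv ^^ l i) (h i) 0) = (\<Prod>i=1..k. (deriv ^^ l i) (h i) 0) * (deriv ^^ l (k+1)) (h (k+1)) 0"
      by (simp add: atLeastAtMostSuc_conv)
    show ?thesis
      unfolding e1 e2 pd pc Dk1 R_def using pf by (simp add: field_simps)
  qed
  have "Re ((deriv ^^ j) Fc (of_real a)) = - ((-1)^j * ((-1)^k * fact j * (\<Sum>l\<in>Lset (k+1) j. R l)))"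
  proof -
    have "(\<Sum>l\<in>Lset (k+1) j. complex_of_real ((-1)^k * fact j * R l)) = of_real ((-1)^k * fact j * (\<Sum>l\<in>Lset (k+1) j. R l))"
      unfolding of_real_sum[symmetric] sum_distrib_left ..
    moreover have "- ((-1)^j * complex_of_real X) = complex_of_real (- ((-1)^j * X))" for X
      by simp
    ultimately show ?thesis
      unfolding D1 D2 trm by (simp only: Re_complex_of_real)
  qed
  also have "\<dots> = (-1) ^ (k + j - 1) * fact j * (\<Sum>l\<in>Lset (k+1) j. R l)"
  proof -
    obtain j' where "j = Suc j'" using j by (cases j) auto
    thus ?thesis by (simp add: power_add)
  qed
  finally have val: "Re ((deriv ^^ j) Fc (of_real a)) = (-1) ^ (k + j - 1) * fact j * (\<Sum>l\<in>Lset (k+1) j. R l)" .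
  have "((\<lambda>s. (deriv ^^ j) f s) \<longlongrightarrow> (-1) ^ (k + j - 1) * fact j * (\<Sum>l\<in>Lset (k+1) j. R l)) (at a)"
    using Lim_transform_eventually[OF lim eventually_mono[OF ev]] val by simp
  thus ?thesis by (simp add: a_def R_def Lset_def)
qed

end
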